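(* Let $l\geq 1$ and $m\geq 1$ be integers. Then for each of the following five choices of $(d_1,d_2,\beta)$ there is a constant $C>0$ such that for all distribution functions $F$ and $G$ of probability distributions supported on $\mathbb{Z}$, \[ d_1(\bar F^m,\bar G^m)\leq C\, d_2(F,G)^{1-\beta}\,\bigl(\|\Delta^{l+1}\bar F^m\|_1+\|\Delta^{l+1}\bar G^m\|_1\bigr)^{\beta}: \] (i) $d_1=d_{\mathrm{loc}}$, $d_2=d_{\mathrm{TV}}$, $\beta=1/l$; (ii) $d_1=d_{\mathrm{loc}}$, $d_2=d_{\mathrm{K}}$, $\beta=1/l$; (iii) $d_1=d_{\mathrm{loc}}$, $d_2=d_{\mathrm{W}}$, $\beta=2/(l+1)$; (iv) $d_1=d_{\mathrm{TV}}$, $d_2=d_{\mathrm{W}}$, $\beta=1/(l+1)$; (v) $d_1=d_{\mathrm{K}}$, $d_2=d_{\mathrm{W}}$, $\beta=1/(l+1)$.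
   Context: For $f:\mathbb{Z}\to\mathbb{R}$, $\|f\|_p=(\sum_{i\in\mathbb{Z}}|f(i)|^p)^{1/p}$ for $1\le p<\infty$ and $\|f\|_\infty=\sup_{i\in\mathbb{Z}}|f(i)|$. Difference operators: $\Delta^0 f(k)=f(k)$, $\Delta^{n+1}f(k)=\Delta^n f(k+1)-\Delta^n f(k)$; write $\Delta=\Delta^1$. The distribution function of an integer-supported distribution is $F(j)=\mathbb{P}[X\le j]$, $j\in\mathbb{Z}$. For a positive integer $m$, $\bar F^m(j)=\frac{F(j)+F(j-1)+\dots+F(j-m+1)}{m}$ (so $\bar F^1=F$). For functions $F,G$ on $\mathbb{Z}$: $d_{\mathrm{K}}(F,G)=\|F-G\|_\infty$, $d_{\mathrm{W}}(F,G)=\|F-G\|_1$, $d_{\mathrm{loc}}(F,G)=\|\Delta F-\Delta G\|_\infty$, $d_{\mathrm{TV}}(F,G)=\frac12\|\Delta F-\Delta G\|_1$. *)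

theory Defs
  imports "HOL-Probability.Probability"
begin

definition lnorm1 :: "(int \<Rightarrow> real) \<Rightarrow> real" where
  "lnorm1 f = (\<Sum>\<^sub>\<infinity>i\<in>UNIV. \<bar>f i\<bar>)"

definition lnorminf :: "(int \<Rightarrow> real) \<Rightarrow> real" where
  "lnorminf f = (SUP i. \<bar>f i\<bar>)"

fun Delta :: "nat \<Rightarrow> (int \<Rightarrow> real) \<Rightarrow> int \<Rightarrow> real" where
  "Delta 0 f k = f k"
| "Delta (Suc n) f k = Delta n f (k + 1) - Delta n f k"

definition distfun :: "int pmf \<Rightarrow> int \<Rightarrow> real" where
  "distfun p j = measure_pmf.prob p {..j}"

definition Fbar :: "nat \<Rightarrow> (int \<Rightarrow> real) \<Rightarrow> int \<Rightarrow> real" where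
  "Fbar m F j = (\<Sum>i<m. F (j - int i)) / real m"

definition dK :: "(int \<Rightarrow> real) \<Rightarrow> (int \<Rightarrow> real) \<Rightarrow> real" where
  "dK F G = lnorminf (\<lambda>i. F i - G i)"

definition dW :: "(int \<Rightarrow> real) \<Rightarrow> (int \<Rightarrow> real) \<Rightarrow> real" where
  "dW F G = lnorm1 (\<lambda>i. F i - G i)"

definition dloc :: "(int \<Rightarrow> real) \<Rightarrow> (int \<Rightarrow> real) \<Rightarrow> real" where
  "dloc F G = lnorminf (\<lambda>i. Delta 1 F i - Delta 1 G i)"

definition dTV :: "(int \<Rightarrow> real) \<Rightarrow> (int \<Rightarrow> real) \<Rightarrow> real" where
  "dTV F G = lnorm1 (\<lambda>i. Delta 1 F i - Delta 1 G i) / 2"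

definition smooth :: "nat \<Rightarrow> nat \<Rightarrow> (int \<Rightarrow> real) \<Rightarrow> (int \<Rightarrow> real) \<Rightarrow> real" where
  "smooth l m F G = lnorm1 (Delta (l+1) (Fbar m F)) + lnorm1 (Delta (l+1) (Fbar m G))"

end

theory Submission
  imports Defs "HOL-Computational_Algebra.Polynomial"
begin


definition pop :: "real poly \<Rightarrow> (int \<Rightarrow> real) \<Rightarrow> int \<Rightarrow> real" where
  "pop P u k = (\<Sum>i\<le>degree P. coeff P i * u (k + int i))"

lemma pop_ext: "degree P \<le> N \<Longrightarrow> pop P u k = (\<Sum>i\<le>N. coeff P i * u (k + int i))"
  unfolding pop_def by (rule sum.mono_neutral_left) (auto simp: coeff_eq_0)

lemma pop_pCons: "pop (pCons a P) u k = a * u k + pop P u (k+1)"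
proof -
  have "pop (pCons a P) u k = (\<Sum>i\<le>Suc (degree P). coeff (pCons a P) i * u (k + int i))"
    by (rule pop_ext) (rule degree_pCons_le)
  also have "\<dots> = a * u k + (\<Sum>i\<le>degree P. coeff P i * u (k + 1 + int i))"
    by (subst sum.atMost_Suc_shift) (simp add: algebra_simps)
  also have "\<dots> = a * u k + pop P u (k+1)" by (simp add: pop_def)
  finally show ?thesis .
qed

lemma pop_0[simp]: "pop 0 u k = 0" by (simp add: pop_def)

lemma pop_add: "pop (P+Q) u k = pop P u k + pop Q u k"
proof -
  define N where "N = max (degree P) (degree Q)"
  have "degree (P+Q) \<le> N" unfolding N_def by (rule degree_add_le) auto
  then have "pop (P+Q) u k = (\<Sum>i\<le>N. coeff (P+Q) i * u (k + int i))" by (rule pop_ext)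
  also have "\<dots> = (\<Sum>i\<le>N. coeff P i * u (k + int i)) + (\<Sum>i\<le>N. coeff Q i * u (k + int i))"
    by (simp add: algebra_simps sum.distrib)
  also have "\<dots> = pop P u k + pop Q u k"
    by (simp add: pop_ext[of P N] pop_ext[of Q N] N_def)
  finally show ?thesis .
qed

lemma pop_smult: "pop (smult c P) u k = c * pop P u k"
proof -
  have "pop (smult c P) u k = (\<Sum>i\<le>degree P. coeff (smult c P) i * u (k + int i))"
    by (rule pop_ext) (rule degree_smult_le)
  then show ?thesis by (simp add: pop_def sum_distrib_left mult.assoc)
qed

lemma pop_uminus: "pop (- P) u k = - pop P u k"
  using pop_smult[of "-1" P u k] by simp

lemma pop_diff: "pop (P - Q) u k = pop P u k - pop Q u k"
  using pop_add[of P "-Q" u k] pop_uminus[of Q u k] by simp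

lemma pop_mult: "pop (P*Q) u k = pop P (pop Q u) k"
proof (induction P arbitrary: k)
  case 0
  then show ?case by simp
next
  case (pCons a P)
  show ?case
    by (simp add: pop_add pop_smult pop_pCons pCons.IH)
qed

lemma pop_1: "pop 1 u k = u k"
  by (simp add: pop_def)

lemma pop_sum: "finite A \<Longrightarrow> pop (\<Sum>a\<in>A. f a) u k = (\<Sum>a\<in>A. pop (f a) u k)"
  by (induction A rule: finite_induct) (auto simp: pop_add)

lemma pop_monom: "pop (monom c j) u k = c * u (k + int j)"
proof -
  have "pop (monom c j) u k = (\<Sum>i\<le>j. coeff (monom c j) i * u (k + int i))"
    by (rule pop_ext) (simp add: degree_monom_le)
  also have "\<dots> = (\<Sum>i\<le>j. (if j = i then c * u (k + int j) else 0))"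
    by (intro sum.cong) (auto simp: coeff_monom)
  also have "\<dots> = c * u (k + int j)"
    by (subst sum.delta') auto
  finally show ?thesis .
qed

abbreviation Dp :: "real poly" where "Dp \<equiv> [:-1, 1:]"

lemma pop_Dp: "pop Dp u k = u (k+1) - u k"
  by (simp add: pop_pCons)

lemma Delta_1: "Delta 1 f k = f (k+1) - f k"
  by (simp add: One_nat_def)

lemma pop_Dp_pow: "pop (Dp ^ n) u = Delta n u"
proof (induction n)
  case 0
  then show ?case by (auto simp: pop_1)
next
  case (Suc n)
  show ?case
    by (rule ext) (simp only: power_Suc pop_mult Suc pop_Dp Delta.simps)
qed

definition cn1 :: "real poly \<Rightarrow> real" where
  "cn1 P = (\<Sum>i\<le>degree P. \<bar>coeff P i\<bar>)"

lemma cn1_ext: "degree P \<le> N \<Longrightarrow> cn1 P = (\<Sum>i\<le>N. \<bar>coeff P i\<bar>)"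
  unfolding cn1_def by (rule sum.mono_neutral_left) (auto simp: coeff_eq_0)

lemma cn1_nonneg: "cn1 P \<ge> 0" unfolding cn1_def by (intro sum_nonneg) auto

lemma coeff_le_cn1: "\<bar>coeff P i\<bar> \<le> cn1 P"
proof -
  have "cn1 P = (\<Sum>j\<le>max i (degree P). \<bar>coeff P j\<bar>)" by (rule cn1_ext) auto
  also have "\<dots> \<ge> \<bar>coeff P i\<bar>"
    by (rule member_le_sum) auto
  finally show ?thesis .
qed

lemma cn1_pCons: "cn1 (pCons a P) = \<bar>a\<bar> + cn1 P"
proof -
  have "cn1 (pCons a P) = (\<Sum>i\<le>Suc (degree P). \<bar>coeff (pCons a P) i\<bar>)"
    by (rule cn1_ext) (rule degree_pCons_le)
  also have "\<dots> = \<bar>a\<bar> + cn1 P"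
    by (subst sum.atMost_Suc_shift) (simp add: cn1_def)
  finally show ?thesis .
qed

lemma cn1_0[simp]: "cn1 0 = 0" by (simp add: cn1_def)
lemma cn1_1[simp]: "cn1 1 = 1" by (simp add: cn1_def)

lemma cn1_add: "cn1 (P+Q) \<le> cn1 P + cn1 Q"
proof -
  define N where "N = max (degree P) (degree Q)"
  have "degree (P+Q) \<le> N" unfolding N_def by (rule degree_add_le) auto
  then have "cn1 (P+Q) = (\<Sum>i\<le>N. \<bar>coeff (P+Q) i\<bar>)" by (rule cn1_ext)
  also have "\<dots> \<le> (\<Sum>i\<le>N. \<bar>coeff P i\<bar> + \<bar>coeff Q i\<bar>)"
    by (intro sum_mono) (simp add: abs_triangle_ineq)
  also have "\<dots> = cn1 P + cn1 Q"
    by (simp add: sum.distrib cn1_ext[of P N] cn1_ext[of Q N] N_def)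
  finally show ?thesis .
qed

lemma cn1_smult: "cn1 (smult c P) = \<bar>c\<bar> * cn1 P"
proof -
  have "cn1 (smult c P) = (\<Sum>i\<le>degree P. \<bar>coeff (smult c P) i\<bar>)"
    by (rule cn1_ext) (rule degree_smult_le)
  then show ?thesis by (simp add: cn1_def sum_distrib_left abs_mult)
qed

lemma cn1_uminus: "cn1 (- P) = cn1 P"
  using cn1_smult[of "-1" P] by simp

lemma cn1_diff: "cn1 (P - Q) \<le> cn1 P + cn1 Q"
  using cn1_add[of P "-Q"] by (simp add: cn1_uminus)

lemma cn1_mult: "cn1 (P*Q) \<le> cn1 P * cn1 Q"
proof (induction P)
  case 0
  then show ?case by simp
next
  case (pCons a P)
  have "cn1 (pCons a P * Q) \<le> cn1 (smult a Q) + cn1 (pCons 0 (P*Q))"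
    by (simp add: cn1_add)
  also have "\<dots> \<le> \<bar>a\<bar> * cn1 Q + cn1 P * cn1 Q"
    using pCons.IH by (simp add: cn1_smult cn1_pCons)
  finally show ?case by (simp add: cn1_pCons algebra_simps)
qed

lemma cn1_pow: "cn1 (P^n) \<le> cn1 P ^ n"
proof (induction n)
  case 0 then show ?case by simp
next
  case (Suc n)
  have "cn1 (P^Suc n) \<le> cn1 P * cn1 (P^n)" by (simp add: cn1_mult)
  also have "\<dots> \<le> cn1 P * cn1 P ^ n" using Suc by (simp add: mult_left_mono cn1_nonneg)
  finally show ?case by simp
qed

lemma cn1_sum: "finite A \<Longrightarrow> cn1 (\<Sum>a\<in>A. f a) \<le> (\<Sum>a\<in>A. cn1 (f a))"
proof (induction A rule: finite_induct)
  case empty then show ?case by simp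
next
  case (insert x F)
  then show ?case using cn1_add[of "f x" "sum f F"] by simp
qed

lemma cn1_monom: "cn1 (monom c j) = \<bar>c\<bar>"
proof -
  have "cn1 (monom c j) = (\<Sum>i\<le>j. \<bar>coeff (monom c j) i\<bar>)"
    by (rule cn1_ext) (simp add: degree_monom_le)
  also have "\<dots> = (\<Sum>i\<le>j. (if j = i then \<bar>c\<bar> else 0))"
    by (intro sum.cong) (auto simp: coeff_monom)
  also have "\<dots> = \<bar>c\<bar>"
    by (subst sum.delta') auto
  finally show ?thesis .
qed

lemma coeff_mult_bound:
  assumes "\<And>i. \<bar>coeff P i\<bar> \<le> c"
  shows "\<bar>coeff (P*Q) n\<bar> \<le> c * cn1 Q"
  using assms
proof (induction Q arbitrary: n)
  case 0
  then show ?case by simp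
next
  case (pCons b Q)
  have c0: "c \<ge> 0" using pCons.prems[of 0] by linarith
  have "coeff (P * pCons b Q) n = b * coeff P n + coeff (pCons 0 (P*Q)) n"
    by (simp add: mult_pCons_right)
  also have "\<bar>\<dots>\<bar> \<le> \<bar>b\<bar> * c + c * cn1 Q"
  proof -
    have "\<bar>b * coeff P n\<bar> \<le> \<bar>b\<bar> * c"
      by (simp add: abs_mult mult_left_mono pCons.prems)
    moreover have "\<bar>coeff (pCons 0 (P*Q)) n\<bar> \<le> c * cn1 Q"
      using pCons.IH[OF pCons.prems] c0 cn1_nonneg[of Q]
      by (cases n) auto
    ultimately show ?thesis by (smt (verit) abs_triangle_ineq)
  qed
  finally show ?case by (simp add: cn1_pCons algebra_simps)
qed



definition L1 :: "(int \<Rightarrow> real) \<Rightarrow> bool" where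
  "L1 u \<longleftrightarrow> (\<lambda>i. \<bar>u i\<bar>) summable_on UNIV"

lemma lnorm1_nonneg: "lnorm1 u \<ge> 0"
  unfolding lnorm1_def by (rule infsum_nonneg) auto

lemma bij_shift: "bij_betw (\<lambda>k::int. k + c) UNIV UNIV"
  by (rule bij_betwI[of _ _ _ "\<lambda>k. k - c"]) auto

lemma L1_shift:
  assumes "L1 u" shows "L1 (\<lambda>k. u (k + c))" "lnorm1 (\<lambda>k. u (k + c)) = lnorm1 u"
proof -
  show "L1 (\<lambda>k. u (k + c))"
    using assms summable_on_reindex_bij_betw[OF bij_shift[of c], of "\<lambda>i. \<bar>u i\<bar>"]
    by (simp add: L1_def)
  show "lnorm1 (\<lambda>k. u (k + c)) = lnorm1 u"
    using infsum_reindex_bij_betw[OF bij_shift[of c], of "\<lambda>i. \<bar>u i\<bar>"]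
    by (simp add: lnorm1_def)
qed

lemma L1_add:
  assumes "L1 u" "L1 v"
  shows "L1 (\<lambda>k. u k + v k)" "lnorm1 (\<lambda>k. u k + v k) \<le> lnorm1 u + lnorm1 v"
proof -
  have s: "(\<lambda>k. \<bar>u k\<bar> + \<bar>v k\<bar>) summable_on UNIV"
    using assms unfolding L1_def by (rule summable_on_add)
  have "(\<lambda>k. norm (u k + v k)) summable_on UNIV"
    by (rule Infinite_Sum.abs_summable_on_comparison_test[where g="\<lambda>k. \<bar>u k\<bar> + \<bar>v k\<bar>"])
       (use s in \<open>auto simp: abs_triangle_ineq\<close>)
  then show L: "L1 (\<lambda>k. u k + v k)" by (simp add: L1_def)
  have "lnorm1 (\<lambda>k. u k + v k) \<le> infsum (\<lambda>k. \<bar>u k\<bar> + \<bar>v k\<bar>) UNIV"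
    unfolding lnorm1_def using L s by (intro infsum_mono) (auto simp: L1_def)
  also have "\<dots> = lnorm1 u + lnorm1 v"
    unfolding lnorm1_def using assms by (intro infsum_add) (auto simp: L1_def)
  finally show "lnorm1 (\<lambda>k. u k + v k) \<le> lnorm1 u + lnorm1 v" .
qed

lemma L1_scale:
  assumes "L1 u"
  shows "L1 (\<lambda>k. c * u k)" "lnorm1 (\<lambda>k. c * u k) = \<bar>c\<bar> * lnorm1 u"
proof -
  show "L1 (\<lambda>k. c * u k)"
    using summable_on_cmult_right[of "\<lambda>i. \<bar>u i\<bar>" UNIV "\<bar>c\<bar>"] assms
    by (simp add: L1_def abs_mult)
  show "lnorm1 (\<lambda>k. c * u k) = \<bar>c\<bar> * lnorm1 u"
    using infsum_cmult_right[of "\<bar>c\<bar>" "\<lambda>i. \<bar>u i\<bar>" UNIV] assms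
    by (simp add: L1_def lnorm1_def abs_mult)
qed

lemma L1_diff:
  assumes "L1 u" "L1 v"
  shows "L1 (\<lambda>k. u k - v k)" "lnorm1 (\<lambda>k. u k - v k) \<le> lnorm1 u + lnorm1 v"
proof -
  have v: "L1 (\<lambda>k. (-1) * v k)" "lnorm1 (\<lambda>k. (-1) * v k) = lnorm1 v"
    using L1_scale[OF assms(2), of "-1"] by auto
  show "L1 (\<lambda>k. u k - v k)" using L1_add[OF assms(1) v(1)] by simp
  show "lnorm1 (\<lambda>k. u k - v k) \<le> lnorm1 u + lnorm1 v" using L1_add[OF assms(1) v(1)] v(2) by simp
qed

lemma L1_zero: "L1 (\<lambda>k. 0)" "lnorm1 (\<lambda>k. 0) = 0"
  by (auto simp: L1_def lnorm1_def)

lemma L1_sum: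
  assumes "finite A" "\<And>a. a \<in> A \<Longrightarrow> L1 (f a)"
  shows "L1 (\<lambda>k. \<Sum>a\<in>A. f a k) \<and> lnorm1 (\<lambda>k. \<Sum>a\<in>A. f a k) \<le> (\<Sum>a\<in>A. lnorm1 (f a))"
  using assms
proof (induction A rule: finite_induct)
  case empty
  then show ?case using L1_zero by simp
next
  case (insert x F)
  then have IH: "L1 (\<lambda>k. \<Sum>a\<in>F. f a k)" "lnorm1 (\<lambda>k. \<Sum>a\<in>F. f a k) \<le> (\<Sum>a\<in>F. lnorm1 (f a))"
    by auto
  have fx: "L1 (f x)" using insert by auto
  have "L1 (\<lambda>k. f x k + (\<Sum>a\<in>F. f a k))" using L1_add[OF fx IH(1)] by simp
  moreover have "lnorm1 (\<lambda>k. f x k + (\<Sum>a\<in>F. f a k)) \<le> lnorm1 (f x) + (\<Sum>a\<in>F. lnorm1 (f a))"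
    using L1_add(2)[OF fx IH(1)] IH(2) by simp
  ultimately show ?case using insert by simp
qed

lemma L1_finsum:
  assumes "L1 u" "finite A" "inj_on g A"
  shows "(\<Sum>a\<in>A. \<bar>u (g a)\<bar>) \<le> lnorm1 u"
proof -
  have "(\<Sum>a\<in>A. \<bar>u (g a)\<bar>) = (\<Sum>i\<in>g ` A. \<bar>u i\<bar>)"
    using assms by (simp add: sum.reindex)
  also have "\<dots> \<le> lnorm1 u"
    unfolding lnorm1_def using assms
    by (intro finite_sum_le_infsum) (auto simp: L1_def)
  finally show ?thesis .
qed

lemma L1_point: "L1 u \<Longrightarrow> \<bar>u k\<bar> \<le> lnorm1 u"
  using L1_finsum[of u "{k}" id] by simp

lemma L1_window: "L1 u \<Longrightarrow> (\<Sum>i<n. \<bar>u ((j::int) + int i)\<bar>) \<le> lnorm1 u"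
  by (rule L1_finsum) (auto simp: inj_on_def)

lemma L1_window_abs: "L1 u \<Longrightarrow> \<bar>\<Sum>i<n. u ((j::int) + int i)\<bar> \<le> lnorm1 u"
  using L1_window[of u j n] sum_abs[of "\<lambda>i. u (j + int i)" "{..<n}"] by linarith

lemma sup_le: "(\<And>k. \<bar>u k\<bar> \<le> M) \<Longrightarrow> lnorminf u \<le> M"
  unfolding lnorminf_def by (rule cSUP_least) auto

lemma sup_ge: "(\<And>k. \<bar>u k\<bar> \<le> M) \<Longrightarrow> \<bar>u k\<bar> \<le> lnorminf u"
  unfolding lnorminf_def by (rule cSUP_upper) (use bdd_aboveI2[of UNIV "\<lambda>i. \<bar>u i\<bar>" M] in auto)

lemma pop_inf:
  assumes "\<And>j. \<bar>v j\<bar> \<le> M"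
  shows "\<bar>pop P v k\<bar> \<le> cn1 P * M"
proof (induction P arbitrary: k)
  case 0
  then show ?case by simp
next
  case (pCons a P)
  have "\<bar>pop (pCons a P) v k\<bar> \<le> \<bar>a\<bar> * \<bar>v k\<bar> + \<bar>pop P v (k+1)\<bar>"
    by (simp add: pop_pCons abs_mult[symmetric] abs_triangle_ineq)
  also have "\<dots> \<le> \<bar>a\<bar> * M + cn1 P * M"
    using pCons.IH[of "k+1"] assms[of k] by (intro add_mono mult_left_mono) auto
  finally show ?case by (simp add: cn1_pCons algebra_simps)
qed

lemma pop_l1inf:
  assumes "\<And>i. \<bar>coeff P i\<bar> \<le> c" "L1 v"
  shows "\<bar>pop P v k\<bar> \<le> c * lnorm1 v"
proof -
  have "\<bar>pop P v k\<bar> \<le> (\<Sum>i\<le>degree P. \<bar>coeff P i * v (k + int i)\<bar>)"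
    unfolding pop_def by (rule sum_abs)
  also have "\<dots> \<le> (\<Sum>i\<le>degree P. c * \<bar>v (k + int i)\<bar>)"
    by (intro sum_mono) (simp add: abs_mult assms(1) mult_right_mono)
  also have "\<dots> = c * (\<Sum>i\<le>degree P. \<bar>v (k + int i)\<bar>)" by (simp add: sum_distrib_left)
  also have "\<dots> \<le> c * lnorm1 v"
  proof (rule mult_left_mono)
    show "(\<Sum>i\<le>degree P. \<bar>v (k + int i)\<bar>) \<le> lnorm1 v"
      by (rule L1_finsum[OF assms(2)]) (auto simp: inj_on_def)
    show "c \<ge> 0" using assms(1)[of 0] by linarith
  qed
  finally show ?thesis .
qed

lemma pop_l1:
  assumes "L1 v"
  shows "L1 (pop P v) \<and> lnorm1 (pop P v) \<le> cn1 P * lnorm1 v"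
proof (induction P)
  case 0
  then show ?case using L1_zero by (simp add: fun_eq_iff[symmetric])
next
  case (pCons a P)
  have e: "pop (pCons a P) v = (\<lambda>k. a * v k + pop P v (k+1))"
    by (simp add: pop_pCons fun_eq_iff)
  have 1: "L1 (\<lambda>k. a * v k)" "lnorm1 (\<lambda>k. a * v k) = \<bar>a\<bar> * lnorm1 v"
    using L1_scale[OF assms] by auto
  have 2: "L1 (\<lambda>k. pop P v (k+1))" "lnorm1 (\<lambda>k. pop P v (k+1)) \<le> cn1 P * lnorm1 v"
    using L1_shift[of "pop P v" 1] pCons.IH by auto
  show ?case unfolding e using L1_add[OF 1(1) 2(1)] 1(2) 2(2)
    by (auto simp: cn1_pCons algebra_simps)
qed



definition G :: "nat \<Rightarrow> real poly" where "G i = (\<Sum>j<i. monom 1 j)"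

lemma coeff_G: "coeff (G i) j = (if j < i then 1 else 0)"
  by (simp add: G_def coeff_sum coeff_monom)

lemma cn1_G: "cn1 (G i) \<le> real i"
proof -
  have "cn1 (G i) \<le> (\<Sum>j<i. cn1 (monom (1::real) j))" unfolding G_def by (rule cn1_sum) auto
  then show ?thesis by (simp add: cn1_monom)
qed

lemma Dp_monom: "Dp * monom 1 i = monom 1 (Suc i) - monom 1 i"
  by (simp add: monom_Suc)

lemma Dp_G: "Dp * G i = monom 1 i - 1"
proof (induction i)
  case 0
  then show ?case by (simp add: G_def monom_0 one_pCons)
next
  case (Suc i)
  have "G (Suc i) = G i + monom 1 i" by (simp add: G_def)
  then have "Dp * G (Suc i) = Dp * G i + Dp * monom 1 i" by (simp only: distrib_left)
  also have "\<dots> = (monom 1 i - 1) + (monom 1 (Suc i) - monom 1 i)"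
    by (simp only: Suc.IH Dp_monom)
  finally show ?case by (simp add: algebra_simps del: monom_Suc)
qed

definition A :: "nat \<Rightarrow> real poly" where "A n = smult (1 / real n) (G n)"

lemma coeff_A: "\<bar>coeff (A n) j\<bar> \<le> 1 / real n"
  by (simp add: A_def coeff_G)

lemma cn1_A: "cn1 (A n) \<le> 1"
proof (cases "n = 0")
  case True then show ?thesis by (simp add: A_def)
next
  case False
  have "cn1 (A n) = (1 / real n) * cn1 (G n)" by (simp add: A_def cn1_smult)
  also have "\<dots> \<le> (1 / real n) * real n" using cn1_G[of n] by (intro mult_left_mono) auto
  finally show ?thesis using False by simp
qed

lemma pop_A: "pop (A n) v k = (\<Sum>i<n. v (k + int i)) / real n"
  by (simp add: A_def G_def pop_smult pop_sum pop_monom)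

definition PP :: "nat \<Rightarrow> real poly" where "PP n = smult (-1 / real n) (\<Sum>i<n. G i)"

lemma coeff_PP: "\<bar>coeff (PP n) j\<bar> \<le> 1"
proof -
  have "\<bar>coeff (PP n) j\<bar> = (1 / real n) * (\<Sum>i<n. (if j < i then 1 else 0))"
    by (simp add: PP_def coeff_sum coeff_G abs_mult sum_nonneg)
  also have "\<dots> \<le> (1 / real n) * (\<Sum>i<n. 1)"
    by (intro mult_left_mono sum_mono) auto
  also have "\<dots> \<le> 1" by simp
  finally show ?thesis .
qed

lemma cn1_PP: "cn1 (PP n) \<le> real n"
proof -
  have "cn1 (PP n) = (1 / real n) * cn1 (\<Sum>i<n. G i)" by (simp add: PP_def cn1_smult cn1_uminus)
  also have "\<dots> \<le> (1 / real n) * (\<Sum>i<n. cn1 (G i))"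
    by (intro mult_left_mono cn1_sum) auto
  also have "\<dots> \<le> (1 / real n) * (\<Sum>i<n. real n)"
    using cn1_G by (intro mult_left_mono sum_mono) (auto intro: order_trans[OF cn1_G])
  also have "\<dots> \<le> real n" by simp
  finally show ?thesis .
qed

lemma Dp_PP:
  assumes "n \<ge> 1" shows "1 - A n = Dp * PP n"
proof -
  have "Dp * PP n = smult (-1 / real n) (\<Sum>i<n. Dp * G i)"
    by (simp add: PP_def sum_distrib_left mult_smult_right)
  also have "\<dots> = smult (-1 / real n) (\<Sum>i<n. monom 1 i - 1)" by (simp only: Dp_G)
  also have "\<dots> = smult (-1 / real n) (G n - of_nat n)"
    by (simp add: G_def sum_subtractf)
  also have "\<dots> = 1 - A n" using assms
    by (simp add: A_def poly_eq_iff coeff_diff of_nat_poly algebra_simps coeff_pCons split: nat.split)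
  finally show ?thesis by simp
qed

definition RR :: "real poly \<Rightarrow> nat \<Rightarrow> real poly" where "RR B r = (\<Sum>j<r. (1 - B)^j)"

lemma BR: "B * RR B r = 1 - (1 - B)^r"
  by (induction r) (simp_all add: RR_def algebra_simps)

lemma cn1_RR:
  assumes "cn1 B \<le> 1" shows "cn1 (RR B r) \<le> 2^r"
proof -
  have "cn1 (RR B r) \<le> (\<Sum>j<r. cn1 ((1 - B)^j))" unfolding RR_def by (rule cn1_sum) auto
  also have "\<dots> \<le> (\<Sum>j<r. 2^j)"
  proof (intro sum_mono)
    fix j
    have "cn1 (1 - B) \<le> 2" using cn1_diff[of 1 B] assms by simp
    then have "cn1 (1 - B) ^ j \<le> 2 ^ j" by (intro power_mono) (auto simp: cn1_nonneg)
    then show "cn1 ((1 - B)^j) \<le> 2^j" using cn1_pow[of "1-B" j] by linarith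
  qed
  also have "\<dots> \<le> 2^r" by (induction r) auto
  finally show ?thesis .
qed

lemma decomp:
  assumes "1 - B = Dp * P"
  shows "u k = pop (RR B r) (pop B u) k + pop (P^r) (Delta r u) k"
proof -
  have e1: "(1 - B)^r = Dp^r * P^r" using assms by (metis power_mult_distrib)
  have "(1::real poly) = B * RR B r + (1-B)^r" using BR[of B r] by (simp add: algebra_simps)
  then have "(1::real poly) = RR B r * B + P^r * Dp^r" using e1 by (metis mult.commute)
  then have "pop 1 u k = pop (RR B r * B + P^r * Dp^r) u k" by simp
  then show ?thesis by (simp add: pop_1 pop_add pop_mult pop_Dp_pow)
qed



lemma interp:
  fixes U X Y a b :: real and s t :: nat
  assumes s: "s \<ge> 1" and X: "X \<ge> 0" and Y: "Y \<ge> 0" and a: "a \<ge> 0" and b: "b \<ge> 0"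
    and H1: "U \<le> a * X"
    and H2: "\<And>n::nat. n \<ge> 1 \<Longrightarrow> U \<le> a * X / real n ^ s + b * real n ^ t * Y"
  shows "U \<le> (a * 2^s + b) * X powr (real t / real (s+t)) * Y powr (real s / real (s+t))"
proof -
  define e where "e = real (s+t)"
  define \<alpha> where "\<alpha> = real t / e"
  define \<beta> where "\<beta> = real s / e"
  define C where "C = a * 2^s + b"
  have e: "e > 0" using s by (simp add: e_def)
  have "\<alpha> + \<beta> = (real t + real s) / e" by (simp add: \<alpha>_def \<beta>_def add_divide_distrib)
  also have "\<dots> = 1" using e by (simp add: e_def)
  finally have ab: "\<alpha> + \<beta> = 1" .
  have \<alpha>0: "\<alpha> \<ge> 0" and \<beta>0: "\<beta> > 0" using e s by (auto simp: \<alpha>_def \<beta>_def)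
  have "a * 1 \<le> a * 2^s" using a by (intro mult_left_mono) auto
  then have C: "C \<ge> a" "C \<ge> 0" using a b by (auto simp: C_def)
  have goal: "U \<le> C * X powr \<alpha> * Y powr \<beta>"
  proof (cases "X = 0")
    case True
    then show ?thesis using H1 by simp
  next
    case Xn: False
    then have Xp: "X > 0" using X by simp
    show ?thesis
    proof (cases "Y = 0")
      case True
      have "U \<le> 0"
      proof (rule ccontr)
        assume "\<not> U \<le> 0"
        then have Up: "U > 0" by simp
        define n where "n = nat \<lceil>a * X / U\<rceil> + 1"
        have n1: "n \<ge> 1" by (simp add: n_def)
        have "real n > a * X / U" unfolding n_def by linarith
        then have "a * X < U * real n" using Up by (simp add: field_simps)
        then have lt: "a * X / real n < U" using n1 by (simp add: field_simps)
        have "real n \<le> real n ^ s" using n1 s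
          by (metis of_nat_1 of_nat_le_iff of_nat_power power_increasing power_one_right)
        then have "a * X / real n ^ s \<le> a * X / real n"
          using n1 a X by (intro divide_left_mono) auto
        then show False using H2[OF n1] True lt by simp
      qed
      then show ?thesis using True by simp
    next
      case Yn: False
      then have Yp: "Y > 0" using Y by simp
      have XA: "X = X powr \<alpha> * X powr \<beta>" using Xp ab by (simp add: powr_add[symmetric])
      have YA: "Y = Y powr \<alpha> * Y powr \<beta>" using Yp ab by (simp add: powr_add[symmetric])
      show ?thesis
      proof (cases "X \<le> Y")
        case True
        have "U \<le> a * X" by (rule H1)
        also have "\<dots> = a * (X powr \<alpha> * X powr \<beta>)" using XA by simp
        also have "\<dots> \<le> C * (X powr \<alpha> * Y powr \<beta>)"
          using True \<beta>0 a C X by (intro mult_mono mult_left_mono powr_mono2) auto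
        finally show ?thesis by (simp add: mult.assoc)
      next
        case False
        define \<rho> where "\<rho> = (X / Y) powr (1 / e)"
        have \<rho>1: "\<rho> \<ge> 1" unfolding \<rho>_def using False Yp e
          by (intro ge_one_powr_ge_zero) auto
        define n where "n = nat \<lfloor>\<rho>\<rfloor>"
        have n1: "n \<ge> 1" using \<rho>1 unfolding n_def by linarith
        have nle: "real n \<le> \<rho>" and rlt: "\<rho> \<le> 2 * real n" using \<rho>1 n1 unfolding n_def by linarith+
        have rpow: "\<rho> ^ k = (X / Y) powr (real k / e)" for k
          unfolding \<rho>_def using Xp Yp
          by (simp add: powr_realpow[symmetric] powr_powr)
        have t1: "a * X / real n ^ s \<le> a * 2^s * (X powr \<alpha> * Y powr \<beta>)"
        proof -
          have "\<rho> ^ s \<le> (2 * real n) ^ s" using rlt \<rho>1 by (intro power_mono) auto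
          then have "\<rho> ^ s \<le> 2^s * real n ^ s" by (simp add: power_mult_distrib)
          then have "1 / real n ^ s \<le> 2^s / \<rho> ^ s" using n1 \<rho>1
            by (simp add: field_simps)
          then have "a * X / real n ^ s \<le> a * X * (2^s / \<rho> ^ s)"
            using a X by (metis mult_left_mono mult_nonneg_nonneg times_divide_eq_right mult_1_right)
          also have "X / \<rho> ^ s = X powr \<alpha> * Y powr \<beta>"
          proof -
            have "\<rho> ^ s = X powr \<beta> / Y powr \<beta>"
              using Xp Yp by (simp add: rpow \<beta>_def powr_divide)
            then have "X / \<rho> ^ s = (X powr \<alpha> * X powr \<beta>) / (X powr \<beta> / Y powr \<beta>)"
              using XA by metis
            also have "\<dots> = X powr \<alpha> * Y powr \<beta>" using Xp Yp by (simp add: field_simps)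
            finally show ?thesis .
          qed
          then have "a * X * (2^s / \<rho> ^ s) = a * 2^s * (X powr \<alpha> * Y powr \<beta>)"
            by (metis (no_types, lifting) mult.commute mult.left_commute times_divide_eq_right)
          finally show ?thesis .
        qed
        have t2: "b * real n ^ t * Y \<le> b * (X powr \<alpha> * Y powr \<beta>)"
        proof -
          have "real n ^ t \<le> \<rho> ^ t" using nle n1 by (intro power_mono) auto
          also have "\<rho> ^ t = X powr \<alpha> / Y powr \<alpha>"
            using Xp Yp by (simp add: rpow \<alpha>_def powr_divide)
          finally have "real n ^ t * Y \<le> X powr \<alpha> / Y powr \<alpha> * Y" using Yp by (intro mult_right_mono) auto
          also have "\<dots> = X powr \<alpha> / Y powr \<alpha> * (Y powr \<alpha> * Y powr \<beta>)" using YA by metis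
          also have "\<dots> = X powr \<alpha> * Y powr \<beta>" using Yp by (simp add: field_simps)
          finally show ?thesis using b by (simp add: mult.assoc mult_left_mono)
        qed
        have "U \<le> a * X / real n ^ s + b * real n ^ t * Y" by (rule H2[OF n1])
        also have "\<dots> \<le> a * 2^s * (X powr \<alpha> * Y powr \<beta>) + b * (X powr \<alpha> * Y powr \<beta>)"
          using t1 t2 by linarith
        also have "\<dots> = C * X powr \<alpha> * Y powr \<beta>" by (simp add: C_def algebra_simps)
        finally show ?thesis .
      qed
    qed
  qed
  then show ?thesis by (simp add: C_def \<alpha>_def \<beta>_def e_def)
qed



lemma Delta_diff: "Delta n (\<lambda>k. f k - g k) k = Delta n f k - Delta n g k"
  by (induction n arbitrary: k) auto

lemma Delta_0: "Delta 0 f = f" by (rule ext) simp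

lemma Delta_Suc': "Delta n (Delta 1 f) = Delta (Suc n) f"
proof (induction n)
  case 0 then show ?case by (simp add: Delta_0)
next
  case (Suc n)
  show ?case
  proof (rule ext)
    fix k
    show "Delta (Suc n) (Delta 1 f) k = Delta (Suc (Suc n)) f k"
      by (simp only: Delta.simps(2) Suc.IH)
  qed
qed

lemma Delta_L1: "L1 f \<Longrightarrow> L1 (Delta n f)"
  using pop_l1[of f "Dp^n"] by (simp add: pop_Dp_pow)

lemma Fbar_diff: "Fbar m (\<lambda>k. f k - g k) j = Fbar m f j - Fbar m g j"
  by (simp add: Fbar_def sum_subtractf diff_divide_distrib)

lemma Fbar_Delta_pt: "Delta n (Fbar m f) k = Fbar m (Delta n f) k"
proof (induction n arbitrary: k)
  case 0 then show ?case by simp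
next
  case (Suc n)
  have "Delta (Suc n) (Fbar m f) k = Fbar m (Delta n f) (k+1) - Fbar m (Delta n f) k"
    using Suc by simp
  also have "\<dots> = Fbar m (Delta (Suc n) f) k"
    unfolding Fbar_def by (simp add: sum_subtractf diff_divide_distrib algebra_simps)
  finally show ?case .
qed

lemma Fbar_Delta: "Delta n (Fbar m f) = Fbar m (Delta n f)"
  using Fbar_Delta_pt by blast

lemma Fbar_L1:
  assumes "m \<ge> 1" "L1 f"
  shows "L1 (Fbar m f)" "lnorm1 (Fbar m f) \<le> lnorm1 f"
proof -
  have e: "Fbar m f = (\<lambda>j. \<Sum>i<m. (1 / real m) * f (j + (- int i)))"
    by (simp add: Fbar_def fun_eq_iff sum_divide_distrib)
  have c: "L1 (\<lambda>j. (1 / real m) * f (j + (- int i)))"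
       "lnorm1 (\<lambda>j. (1 / real m) * f (j + (- int i))) = (1 / real m) * lnorm1 f" for i
    using L1_scale[OF L1_shift(1)[OF assms(2), of "- int i"], of "1 / real m"]
          L1_shift(2)[OF assms(2), of "- int i"] by auto
  have s: "L1 (\<lambda>j. \<Sum>i<m. (1 / real m) * f (j + (- int i))) \<and>
     lnorm1 (\<lambda>j. \<Sum>i<m. (1 / real m) * f (j + (- int i))) \<le> (\<Sum>i<m. lnorm1 (\<lambda>j. (1 / real m) * f (j + (- int i))))"
    by (rule L1_sum) (use c in auto)
  show "L1 (Fbar m f)" using s e by simp
  have "(\<Sum>i<m. lnorm1 (\<lambda>j. (1 / real m) * f (j + (- int i)))) = (\<Sum>i<m. (1 / real m) * lnorm1 f)"
    by (intro sum.cong refl c(2))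
  also have "\<dots> = lnorm1 f" using assms(1) by simp
  finally have "(\<Sum>i<m. lnorm1 (\<lambda>j. (1 / real m) * f (j + (- int i)))) = lnorm1 f" .
  then show "lnorm1 (Fbar m f) \<le> lnorm1 f" using s e by simp
qed

lemma Fbar_bound:
  assumes "m \<ge> 1" "\<And>j. \<bar>f j\<bar> \<le> M"
  shows "\<bar>Fbar m f j\<bar> \<le> M"
proof -
  have "\<bar>\<Sum>i<m. f (j - int i)\<bar> \<le> (\<Sum>i<m. \<bar>f (j - int i)\<bar>)" by (rule sum_abs)
  also have "\<dots> \<le> (\<Sum>i<m. M)" by (intro sum_mono assms(2))
  finally have "\<bar>\<Sum>i<m. f (j - int i)\<bar> \<le> real m * M" by simp
  then show ?thesis using assms(1) by (simp add: Fbar_def field_simps)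
qed

lemma distfun_bounds: "0 \<le> distfun p j" "distfun p j \<le> 1"
  by (auto simp: distfun_def)

lemma Delta1_distfun: "Delta 1 (distfun p) j = pmf p (j+1)"
proof -
  have "{..j+1} = {j+1} \<union> {..j}" by auto
  then have "measure_pmf.prob p {..j+1} = measure_pmf.prob p {j+1} + measure_pmf.prob p ({..j} - {j+1})"
    by (simp only: measure_pmf.finite_measure_Union' sets_measure_pmf UNIV_I)
  also have "{..j} - {j+1} = {..j}" by auto
  finally have "measure_pmf.prob p {..j+1} = pmf p (j+1) + measure_pmf.prob p {..j}"
    by (simp add: measure_pmf_single)
  then show ?thesis by (simp add: Delta_1 distfun_def)
qed

lemma pmf_L1: "L1 (pmf p)"
proof -
  have "(pmf p) summable_on UNIV"
  proof (rule nonneg_bdd_above_summable_on)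
    show "bdd_above (sum (pmf p) ` {F. F \<subseteq> UNIV \<and> finite F})"
      by (rule bdd_aboveI2[where M=1]) (auto simp: measure_measure_pmf_finite[symmetric])
  qed auto
  then show ?thesis by (simp add: L1_def)
qed

lemma Delta1_distfun_L1: "L1 (Delta 1 (distfun p))"
proof -
  have "Delta 1 (distfun p) = (\<lambda>k. pmf p (k+1))" by (rule ext) (rule Delta1_distfun)
  then show ?thesis using L1_shift(1)[OF pmf_L1[of p], of 1] by (simp only:)
qed



lemma coeff_pow_bound:
  assumes "r \<ge> 1" "\<And>i. \<bar>coeff P i\<bar> \<le> c"
  shows "\<bar>coeff (P^r) j\<bar> \<le> c * cn1 P ^ (r - 1)"
proof -
  obtain r' where r: "r = Suc r'" using assms(1) by (cases r) auto
  have "\<bar>coeff (P * P^r') j\<bar> \<le> c * cn1 (P^r')" by (rule coeff_mult_bound[OF assms(2)])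
  also have "\<dots> \<le> c * cn1 P ^ r'"
    using cn1_pow[of P r'] assms(2)[of 0] by (intro mult_left_mono) auto
  finally show ?thesis using r by simp
qed

lemma pop_A_L1: "L1 v \<Longrightarrow> \<bar>pop (A n) v j\<bar> \<le> lnorm1 v / real n"
  using pop_l1inf[OF coeff_A, of v n j] by simp

lemma ptA:
  assumes r: "r \<ge> 1" and u: "L1 u" and n: "n \<ge> 1"
  shows "\<bar>u k\<bar> \<le> 2^r * lnorm1 u / real n + real n ^ (r-1) * lnorm1 (Delta r u)"
proof -
  have d: "u k = pop (RR (A n) r) (pop (A n) u) k + pop (PP n ^ r) (Delta r u) k"
    by (rule decomp[OF Dp_PP[OF n], where u=u and k=k and r=r])
  have t1: "\<bar>pop (RR (A n) r) (pop (A n) u) k\<bar> \<le> 2^r * lnorm1 u / real n"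
  proof -
    have "\<bar>pop (RR (A n) r) (pop (A n) u) k\<bar> \<le> cn1 (RR (A n) r) * (lnorm1 u / real n)"
      by (rule pop_inf) (rule pop_A_L1[OF u])
    also have "\<dots> \<le> 2^r * (lnorm1 u / real n)"
      using cn1_RR[OF cn1_A] lnorm1_nonneg[of u] by (intro mult_right_mono) auto
    finally show ?thesis by simp
  qed
  have t2: "\<bar>pop (PP n ^ r) (Delta r u) k\<bar> \<le> real n ^ (r-1) * lnorm1 (Delta r u)"
  proof (rule pop_l1inf[OF _ Delta_L1[OF u]])
    fix i
    have "\<bar>coeff (PP n ^ r) i\<bar> \<le> 1 * cn1 (PP n) ^ (r - 1)" by (rule coeff_pow_bound[OF r coeff_PP])
    also have "\<dots> \<le> real n ^ (r - 1)" using cn1_PP[of n] by (simp add: power_mono cn1_nonneg)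
    finally show "\<bar>coeff (PP n ^ r) i\<bar> \<le> real n ^ (r - 1)" .
  qed
  have "\<bar>u k\<bar> \<le> \<bar>pop (RR (A n) r) (pop (A n) u) k\<bar> + \<bar>pop (PP n ^ r) (Delta r u) k\<bar>"
    by (subst d) (rule abs_triangle_ineq)
  then show ?thesis using t1 t2 by linarith
qed

lemma pop_A_Delta: "pop (A n) (Delta 1 w) j = (w (j + int n) - w j) / real n"
proof -
  have "(\<Sum>i<n. Delta 1 w (j + int i)) = (\<Sum>i<n. w (j + int (Suc i)) - w (j + int i))"
    by (intro sum.cong) (auto simp: Delta_1 algebra_simps)
  also have "\<dots> = w (j + int n) - w j"
    by (subst sum_lessThan_telescope) simp
  finally show ?thesis by (simp add: pop_A)
qed

lemma ptB:
  assumes r: "r \<ge> 1" and M: "\<And>j. \<bar>w j\<bar> \<le> M" and Y: "L1 (Delta (Suc r) w)" and n: "n \<ge> 1"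
  shows "\<bar>Delta 1 w k\<bar> \<le> 2^r * (2 * M / real n) + real n ^ (r-1) * lnorm1 (Delta (Suc r) w)"
proof -
  let ?u = "Delta 1 w"
  have d: "?u k = pop (RR (A n) r) (pop (A n) ?u) k + pop (PP n ^ r) (Delta r ?u) k"
    by (rule decomp[OF Dp_PP[OF n], where u="Delta 1 w" and k=k and r=r])
  have M0: "M \<ge> 0" using M[of 0] by linarith
  have b: "\<bar>pop (A n) ?u j\<bar> \<le> 2 * M / real n" for j
  proof -
    have "\<bar>w (j + int n) - w j\<bar> \<le> 2 * M" using M[of j] M[of "j + int n"] by linarith
    then show ?thesis unfolding pop_A_Delta using n by (simp add: divide_right_mono)
  qed
  have t1: "\<bar>pop (RR (A n) r) (pop (A n) ?u) k\<bar> \<le> 2^r * (2 * M / real n)"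
  proof -
    have "\<bar>pop (RR (A n) r) (pop (A n) ?u) k\<bar> \<le> cn1 (RR (A n) r) * (2 * M / real n)"
      by (rule pop_inf) (rule b)
    also have "\<dots> \<le> 2^r * (2 * M / real n)"
      using cn1_RR[OF cn1_A] M0 by (intro mult_right_mono) auto
    finally show ?thesis .
  qed
  have t2: "\<bar>pop (PP n ^ r) (Delta r ?u) k\<bar> \<le> real n ^ (r-1) * lnorm1 (Delta (Suc r) w)"
    unfolding Delta_Suc'
  proof (rule pop_l1inf[OF _ Y])
    fix i
    have "\<bar>coeff (PP n ^ r) i\<bar> \<le> 1 * cn1 (PP n) ^ (r - 1)" by (rule coeff_pow_bound[OF r coeff_PP])
    also have "\<dots> \<le> real n ^ (r - 1)" using cn1_PP[of n] by (simp add: power_mono cn1_nonneg)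
    finally show "\<bar>coeff (PP n ^ r) i\<bar> \<le> real n ^ (r - 1)" .
  qed
  have "\<bar>?u k\<bar> \<le> \<bar>pop (RR (A n) r) (pop (A n) ?u) k\<bar> + \<bar>pop (PP n ^ r) (Delta r ?u) k\<bar>"
    by (subst d) (rule abs_triangle_ineq)
  then show ?thesis using t1 t2 by linarith
qed

lemma ptC:
  assumes r: "r \<ge> 1" and w: "L1 w" and n: "n \<ge> 1"
  shows "\<bar>Delta 1 w k\<bar> \<le> 2^r * (2 * lnorm1 w / real n ^ 2) + 2^r * real n ^ (r-1) * lnorm1 (Delta (Suc r) w)"
proof -
  let ?u = "Delta 1 w"
  define B where "B = A n * A n"
  define P where "P = PP n * (1 + A n)"
  have BP: "1 - B = Dp * P"
  proof -
    have "1 - B = (1 - A n) * (1 + A n)" by (simp add: B_def algebra_simps)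
    also have "\<dots> = Dp * P" by (simp only: Dp_PP[OF n] P_def mult.assoc)
    finally show ?thesis .
  qed
  have cB: "cn1 B \<le> 1"
    using cn1_mult[of "A n" "A n"] cn1_A[of n] cn1_nonneg[of "A n"] unfolding B_def
    by (smt (verit) mult_le_one)
  have c1A: "cn1 (1 + A n) \<le> 2" using cn1_add[of 1 "A n"] cn1_A[of n] by simp
  have d: "?u k = pop (RR B r) (pop B ?u) k + pop (P ^ r) (Delta r ?u) k"
    by (rule decomp[OF BP, where u="Delta 1 w" and k=k and r=r])
  have b: "\<bar>pop B ?u j\<bar> \<le> 2 * lnorm1 w / real n ^ 2" for j
  proof -
    have "pop B ?u j = (\<Sum>i<n. (w (j + int i + int n) - w (j + int i)) / real n) / real n"
      unfolding B_def pop_mult pop_A_Delta by (simp add: pop_A algebra_simps)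
    also have "\<dots> = ((\<Sum>i<n. w ((j + int n) + int i)) - (\<Sum>i<n. w (j + int i))) / (real n ^ 2)"
      by (simp add: sum_divide_distrib[symmetric] sum_subtractf power2_eq_square algebra_simps)
    finally have e: "pop B ?u j = \<dots>" .
    have "\<bar>(\<Sum>i<n. w ((j + int n) + int i)) - (\<Sum>i<n. w (j + int i))\<bar> \<le> 2 * lnorm1 w"
      using L1_window_abs[OF w, of "j + int n" n] L1_window_abs[OF w, of j n] by linarith
    then show ?thesis unfolding e using n by (simp add: divide_right_mono)
  qed
  have t1: "\<bar>pop (RR B r) (pop B ?u) k\<bar> \<le> 2^r * (2 * lnorm1 w / real n ^ 2)"
  proof -
    have "\<bar>pop (RR B r) (pop B ?u) k\<bar> \<le> cn1 (RR B r) * (2 * lnorm1 w / real n ^ 2)"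
      by (rule pop_inf) (rule b)
    also have "\<dots> \<le> 2^r * (2 * lnorm1 w / real n ^ 2)"
      using cn1_RR[OF cB] lnorm1_nonneg[of w] by (intro mult_right_mono) auto
    finally show ?thesis .
  qed
  have t2: "\<bar>pop (P ^ r) (Delta r ?u) k\<bar> \<le> 2^r * real n ^ (r-1) * lnorm1 (Delta (Suc r) w)"
    unfolding Delta_Suc'
  proof (rule pop_l1inf[OF _ Delta_L1[OF w]])
    fix i
    have cP: "\<bar>coeff P i\<bar> \<le> 2" for i
    proof -
      have "\<bar>coeff P i\<bar> \<le> 1 * cn1 (1 + A n)" unfolding P_def by (rule coeff_mult_bound[OF coeff_PP])
      then show ?thesis using c1A by simp
    qed
    have cnP: "cn1 P \<le> 2 * real n"
    proof -
      have "cn1 P \<le> cn1 (PP n) * cn1 (1 + A n)" unfolding P_def by (rule cn1_mult)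
      also have "\<dots> \<le> real n * 2" by (rule mult_mono) (use cn1_PP c1A cn1_nonneg in auto)
      finally show ?thesis by simp
    qed
    have "\<bar>coeff (P ^ r) i\<bar> \<le> 2 * cn1 P ^ (r - 1)" by (rule coeff_pow_bound[OF r cP])
    also have "\<dots> \<le> 2 * (2 * real n) ^ (r - 1)"
      using power_mono[OF cnP cn1_nonneg, of "r - 1"] by simp
    also have "\<dots> = 2^r * real n ^ (r-1)" using r
      by (cases r) (auto simp: power_mult_distrib)
    finally show "\<bar>coeff (P ^ r) i\<bar> \<le> 2^r * real n ^ (r - 1)" .
  qed
  have "\<bar>?u k\<bar> \<le> \<bar>pop (RR B r) (pop B ?u) k\<bar> + \<bar>pop (P ^ r) (Delta r ?u) k\<bar>"
    by (subst d) (rule abs_triangle_ineq)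
  then show ?thesis using t1 t2 by linarith
qed

lemma ptD:
  assumes r: "r \<ge> 1" and w: "L1 w" and n: "n \<ge> 1"
  shows "lnorm1 (Delta 1 w) \<le> 2^r * (2 * lnorm1 w / real n) + real n ^ r * lnorm1 (Delta (Suc r) w)"
proof -
  let ?u = "Delta 1 w"
  have u: "L1 ?u" by (rule Delta_L1[OF w])
  have d: "?u = (\<lambda>k. pop (RR (A n) r) (pop (A n) ?u) k + pop (PP n ^ r) (Delta r ?u) k)"
    by (rule ext) (rule decomp[OF Dp_PP[OF n]])
  have z: "pop (A n) ?u = (\<lambda>j. (1 / real n) * (w (j + int n) - w j))"
    by (rule ext) (unfold pop_A_Delta, simp)
  have wd: "L1 (\<lambda>j. w (j + int n) - w j)" "lnorm1 (\<lambda>j. w (j + int n) - w j) \<le> 2 * lnorm1 w"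
    using L1_diff[OF L1_shift(1)[OF w, of "int n"] w] L1_shift(2)[OF w, of "int n"] by auto
  have zL: "L1 (pop (A n) ?u)" "lnorm1 (pop (A n) ?u) \<le> 2 * lnorm1 w / real n"
    unfolding z using L1_scale[OF wd(1), of "1 / real n"] wd(2) n by (auto simp: divide_right_mono)
  have p1: "L1 (pop (RR (A n) r) (pop (A n) ?u))"
      "lnorm1 (pop (RR (A n) r) (pop (A n) ?u)) \<le> 2^r * (2 * lnorm1 w / real n)"
  proof -
    show "L1 (pop (RR (A n) r) (pop (A n) ?u))" using pop_l1[OF zL(1)] by blast
    have "lnorm1 (pop (RR (A n) r) (pop (A n) ?u)) \<le> cn1 (RR (A n) r) * lnorm1 (pop (A n) ?u)"
      using pop_l1[OF zL(1)] by blast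
    also have "\<dots> \<le> 2^r * (2 * lnorm1 w / real n)"
      using cn1_RR[OF cn1_A] zL(2) lnorm1_nonneg cn1_nonneg by (intro mult_mono) auto
    finally show "lnorm1 (pop (RR (A n) r) (pop (A n) ?u)) \<le> 2^r * (2 * lnorm1 w / real n)" .
  qed
  have Dr: "Delta r ?u = Delta (Suc r) w" by (rule Delta_Suc')
  have p2: "L1 (pop (PP n ^ r) (Delta r ?u))"
      "lnorm1 (pop (PP n ^ r) (Delta r ?u)) \<le> real n ^ r * lnorm1 (Delta (Suc r) w)"
  proof -
    have L: "L1 (Delta r ?u)" by (rule Delta_L1[OF u])
    show "L1 (pop (PP n ^ r) (Delta r ?u))" using pop_l1[OF L] by blast
    have "lnorm1 (pop (PP n ^ r) (Delta r ?u)) \<le> cn1 (PP n ^ r) * lnorm1 (Delta r ?u)"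
      using pop_l1[OF L] by blast
    also have "\<dots> \<le> real n ^ r * lnorm1 (Delta r ?u)"
    proof (rule mult_right_mono)
      show "cn1 (PP n ^ r) \<le> real n ^ r"
        using cn1_pow[of "PP n" r] power_mono[OF cn1_PP[of n] cn1_nonneg, of r] by linarith
    qed (rule lnorm1_nonneg)
    finally show "lnorm1 (pop (PP n ^ r) (Delta r ?u)) \<le> real n ^ r * lnorm1 (Delta (Suc r) w)"
      using Dr by simp
  qed
  have "lnorm1 ?u \<le> lnorm1 (pop (RR (A n) r) (pop (A n) ?u)) + lnorm1 (pop (PP n ^ r) (Delta r ?u))"
    using L1_add(2)[OF p1(1) p2(1)] d by metis
  then show ?thesis using p1(2) p2(2) by linarith
qed



lemma finish:
  fixes U K X X' Y S \<alpha> \<beta> c :: real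
  assumes "U \<le> K * X powr \<alpha> * Y powr \<beta>" "0 \<le> X" "X \<le> c * X'" "0 \<le> Y" "Y \<le> S"
    "0 \<le> \<alpha>" "\<alpha> \<le> 1" "0 \<le> \<beta>" "K \<ge> 0" "c \<ge> 1"
  shows "U \<le> (K * c) * X' powr \<alpha> * S powr \<beta>"
proof -
  have X': "X' \<ge> 0"
  proof (rule ccontr)
    assume "\<not> X' \<ge> 0"
    then have "c * X' < 0" using assms(10) by (intro mult_pos_neg) auto
    then show False using assms(2,3) by linarith
  qed
  have "X powr \<alpha> \<le> (c * X') powr \<alpha>" using assms by (intro powr_mono2) auto
  also have "\<dots> = c powr \<alpha> * X' powr \<alpha>" using X' assms(10) by (simp add: powr_mult)
  also have "\<dots> \<le> c * X' powr \<alpha>"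
  proof (rule mult_right_mono)
    have "c powr \<alpha> \<le> c powr 1" using assms by (intro powr_mono) auto
    then show "c powr \<alpha> \<le> c" using assms by simp
  qed simp
  finally have x: "X powr \<alpha> \<le> c * X' powr \<alpha>" .
  have y: "Y powr \<beta> \<le> S powr \<beta>" using assms by (intro powr_mono2) auto
  have "K * X powr \<alpha> * Y powr \<beta> \<le> K * (c * X' powr \<alpha>) * S powr \<beta>"
  proof -
    have "0 \<le> c * X' powr \<alpha>" using assms(10) by simp
    then show ?thesis using x y assms(9) by (intro mult_mono mult_left_mono) auto
  qed
  then show ?thesis using assms(1) by (simp add: mult.assoc mult.left_commute)
qed

locale pq =
  fixes p q :: "int pmf" and m l :: nat
  assumes m: "m \<ge> 1" and l: "l \<ge> 1"
begin

definition "D = (\<lambda>k. (distfun p) k - (distfun q) k)"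
definition "w = (\<lambda>j. Fbar m (distfun p) j - Fbar m (distfun q) j)"

lemma wD: "w = Fbar m D"
  by (simp add: w_def D_def Fbar_diff fun_eq_iff)

lemma dloc_eq: "dloc (Fbar m (distfun p)) (Fbar m (distfun q)) = lnorminf (Delta 1 w)"
  unfolding dloc_def w_def Delta_diff ..

lemma dTV_eq: "dTV (Fbar m (distfun p)) (Fbar m (distfun q)) = lnorm1 (Delta 1 w) / 2"
  unfolding dTV_def w_def Delta_diff ..

lemma dK_eq: "dK (Fbar m (distfun p)) (Fbar m (distfun q)) = lnorminf w"
  unfolding dK_def w_def by simp

lemma Fbar_smooth_L1: "L1 (Delta (Suc l) (Fbar m (distfun r)))"
proof -
  have "Delta (Suc l) (Fbar m (distfun r)) = Delta l (Fbar m (Delta 1 (distfun r)))"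
    by (simp only: Delta_Suc'[symmetric] Fbar_Delta)
  then show ?thesis
    using Delta_L1[OF Fbar_L1(1)[OF m Delta1_distfun_L1]] by simp
qed

lemma Y: "L1 (Delta (Suc l) w)" "lnorm1 (Delta (Suc l) w) \<le> smooth l m (distfun p) (distfun q)"
proof -
  have e: "Delta (Suc l) w = (\<lambda>k. Delta (Suc l) (Fbar m (distfun p)) k - Delta (Suc l) (Fbar m (distfun q)) k)"
    unfolding w_def by (rule ext) (rule Delta_diff)
  show "L1 (Delta (Suc l) w)" unfolding e by (rule L1_diff(1)[OF Fbar_smooth_L1 Fbar_smooth_L1])
  show "lnorm1 (Delta (Suc l) w) \<le> smooth l m (distfun p) (distfun q)" unfolding e smooth_def
    using L1_diff(2)[OF Fbar_smooth_L1 Fbar_smooth_L1] by simp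
qed

lemma u: "L1 (Delta 1 w)" "lnorm1 (Delta 1 w) \<le> 2 * dTV (distfun p) (distfun q)"
proof -
  have e1: "Delta 1 D = (\<lambda>k. Delta 1 (distfun p) k - Delta 1 (distfun q) k)" unfolding D_def by (rule ext) (rule Delta_diff)
  have L: "L1 (Delta 1 D)" unfolding e1 by (rule L1_diff(1)[OF Delta1_distfun_L1 Delta1_distfun_L1])
  have e: "Delta 1 w = Fbar m (Delta 1 D)" unfolding wD by (rule Fbar_Delta)
  show "L1 (Delta 1 w)" unfolding e by (rule Fbar_L1(1)[OF m L])
  have "lnorm1 (Delta 1 w) \<le> lnorm1 (Delta 1 D)" unfolding e by (rule Fbar_L1(2)[OF m L])
  also have "\<dots> = 2 * dTV (distfun p) (distfun q)" unfolding dTV_def e1 by simp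
  finally show "lnorm1 (Delta 1 w) \<le> 2 * dTV (distfun p) (distfun q)" .
qed

lemma Dbound: "\<bar>D k\<bar> \<le> 1"
  unfolding D_def using distfun_bounds[of p k] distfun_bounds[of q k] by auto

lemma wsup: "\<bar>w j\<bar> \<le> dK (distfun p) (distfun q)"
proof -
  have "\<bar>D k\<bar> \<le> dK (distfun p) (distfun q)" for k unfolding dK_def D_def[symmetric]
    by (rule sup_ge[OF Dbound])
  then show ?thesis unfolding wD by (rule Fbar_bound[OF m])
qed

lemma dK_nonneg: "dK (distfun p) (distfun q) \<ge> 0" using wsup[of 0] by linarith

lemma wL1:
  assumes "(\<lambda>i. \<bar>distfun p i - distfun q i\<bar>) summable_on UNIV"
  shows "L1 w" "lnorm1 w \<le> dW (distfun p) (distfun q)"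
proof -
  have L: "L1 D" using assms by (simp add: L1_def D_def)
  show "L1 w" unfolding wD by (rule Fbar_L1(1)[OF m L])
  show "lnorm1 w \<le> dW (distfun p) (distfun q)" unfolding wD dW_def D_def[symmetric] by (rule Fbar_L1(2)[OF m L])
qed

lemma Delta1_abs: "\<bar>Delta 1 f k\<bar> \<le> \<bar>f (k+1)\<bar> + \<bar>f k\<bar>"
  unfolding Delta_1 by linarith

end



lemma exps:
  assumes "l \<ge> (1::nat)"
  shows "real (l-1) / real (1 + (l-1)) = 1 - 1 / real l"
        "real 1 / real (1 + (l-1)) = 1 / real l"
        "real (l-1) / real (2 + (l-1)) = 1 - 2 / real (l+1)"
        "real 2 / real (2 + (l-1)) = 2 / real (l+1)"
        "real l / real (1 + l) = 1 - 1 / real (l+1)"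
        "real 1 / real (1 + l) = 1 / real (l+1)"
        "0 \<le> 1 - 1 / real l" "1 - 1 / real l \<le> 1"
        "0 \<le> 1 - 2 / real (l+1)" "1 - 2 / real (l+1) \<le> 1"
        "0 \<le> 1 - 1 / real (l+1)" "1 - 1 / real (l+1) \<le> 1"
  using assms by (auto simp: of_nat_diff field_simps)

lemma part1:
  assumes l: "l \<ge> 1" and m: "m \<ge> 1"
  shows "\<exists>C>0. \<forall>(p::int pmf) (q::int pmf).
       dloc (Fbar m (distfun p)) (Fbar m (distfun q))
         \<le> C * (dTV (distfun p) (distfun q) powr (1 - 1 / real l))
             * smooth l m (distfun p) (distfun q) powr (1 / real l)"
proof (intro exI[of _ "(2^l * 2^1 + 1) * 2"] conjI allI)
  show "(2^l * 2^1 + 1) * 2 > (0::real)" by (intro mult_pos_pos add_pos_pos) auto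
  fix p q :: "int pmf"
  interpret pq p q m l using assms by unfold_locales
  define U where "U = lnorminf (Delta 1 w)"
  define X where "X = lnorm1 (Delta 1 w)"
  define Y where "Y = lnorm1 (Delta (Suc l) w)"
  have X0: "X \<ge> 0" "Y \<ge> 0" by (auto simp: X_def Y_def lnorm1_nonneg)
  have H1: "U \<le> 2^l * X" unfolding U_def
  proof (rule sup_le)
    fix k
    have "\<bar>Delta 1 w k\<bar> \<le> X" unfolding X_def by (rule L1_point[OF u(1)])
    also have "\<dots> \<le> 2^l * X" using X0 by (simp add: mult_le_cancel_right1)
    finally show "\<bar>Delta 1 w k\<bar> \<le> 2^l * X" .
  qed
  have H2: "U \<le> 2^l * X / real n ^ 1 + 1 * real n ^ (l-1) * Y" if n: "n \<ge> 1" for n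
    unfolding U_def
  proof (rule sup_le)
    fix k
    show "\<bar>Delta 1 w k\<bar> \<le> 2^l * X / real n ^ 1 + 1 * real n ^ (l-1) * Y"
      using ptA[OF l u(1) n, of k] unfolding X_def Y_def Delta_Suc' by simp
  qed
  have I: "U \<le> (2^l * 2^1 + 1) * X powr (real (l-1) / real (1 + (l-1))) * Y powr (real 1 / real (1 + (l-1)))"
    by (rule interp[where s=1 and t="l-1", OF _ X0(1) X0(2) _ _ H1 H2]) auto
  have "U \<le> ((2^l * 2^1 + 1) * 2) * dTV (distfun p) (distfun q) powr (1 - 1 / real l)
             * smooth l m (distfun p) (distfun q) powr (1 / real l)"
    by (rule finish[OF I[unfolded exps[OF l]] X0(1) _ X0(2)])
       (use u(2) Y(2) exps[OF l] in \<open>auto simp: X_def Y_def\<close>)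
  then show "dloc (Fbar m (distfun p)) (Fbar m (distfun q))
         \<le> ((2^l * 2^1 + 1) * 2) * (dTV (distfun p) (distfun q) powr (1 - 1 / real l))
             * smooth l m (distfun p) (distfun q) powr (1 / real l)"
    by (simp add: dloc_eq U_def)
qed

lemma part2:
  assumes l: "l \<ge> 1" and m: "m \<ge> 1"
  shows "\<exists>C>0. \<forall>(p::int pmf) (q::int pmf).
       dloc (Fbar m (distfun p)) (Fbar m (distfun q))
         \<le> C * (dK (distfun p) (distfun q) powr (1 - 1 / real l))
             * smooth l m (distfun p) (distfun q) powr (1 / real l)"
proof (intro exI[of _ "(2^(l+1) * 2^1 + 1) * 1"] conjI allI)
  show "(2^(l+1) * 2^1 + 1) * 1 > (0::real)" by (intro mult_pos_pos add_pos_pos) auto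
  fix p q :: "int pmf"
  interpret pq p q m l using assms by unfold_locales
  define U where "U = lnorminf (Delta 1 w)"
  define X where "X = dK (distfun p) (distfun q)"
  define Y where "Y = lnorm1 (Delta (Suc l) w)"
  have X0: "X \<ge> 0" "Y \<ge> 0" by (auto simp: X_def Y_def lnorm1_nonneg dK_nonneg)
  have H1: "U \<le> 2^(l+1) * X" unfolding U_def
  proof (rule sup_le)
    fix k
    have "\<bar>Delta 1 w k\<bar> \<le> 2 * X" using Delta1_abs[of w k] wsup[of k] wsup[of "k+1"]
      unfolding X_def by linarith
    also have "\<dots> \<le> 2^(l+1) * X" using X0 l
      by (intro mult_right_mono) (auto simp: self_le_power)
    finally show "\<bar>Delta 1 w k\<bar> \<le> 2^(l+1) * X" .
  qed
  have H2: "U \<le> 2^(l+1) * X / real n ^ 1 + 1 * real n ^ (l-1) * Y" if n: "n \<ge> 1" for n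
    unfolding U_def
  proof (rule sup_le)
    fix k
    have "\<bar>Delta 1 w k\<bar> \<le> 2^l * (2 * X / real n) + real n ^ (l-1) * Y"
      using ptB[OF l wsup Y(1) n, of k] unfolding X_def Y_def by simp
    then show "\<bar>Delta 1 w k\<bar> \<le> 2^(l+1) * X / real n ^ 1 + 1 * real n ^ (l-1) * Y"
      by (simp add: algebra_simps)
  qed
  have I: "U \<le> (2^(l+1) * 2^1 + 1) * X powr (real (l-1) / real (1 + (l-1))) * Y powr (real 1 / real (1 + (l-1)))"
    by (rule interp[where s=1 and t="l-1", OF _ X0(1) X0(2) _ _ H1 H2]) auto
  have "U \<le> ((2^(l+1) * 2^1 + 1) * 1) * dK (distfun p) (distfun q) powr (1 - 1 / real l)
             * smooth l m (distfun p) (distfun q) powr (1 / real l)"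
    by (rule finish[OF I[unfolded exps[OF l]] X0(1) _ X0(2)])
       (use Y(2) exps[OF l] in \<open>auto simp: X_def Y_def\<close>)
  then show "dloc (Fbar m (distfun p)) (Fbar m (distfun q))
         \<le> ((2^(l+1) * 2^1 + 1) * 1) * (dK (distfun p) (distfun q) powr (1 - 1 / real l))
             * smooth l m (distfun p) (distfun q) powr (1 / real l)"
    by (simp add: dloc_eq U_def)
qed

lemma part3:
  assumes l: "l \<ge> 1" and m: "m \<ge> 1"
  shows "\<exists>C>0. \<forall>(p::int pmf) (q::int pmf).
       (\<lambda>i. \<bar>distfun p i - distfun q i\<bar>) summable_on UNIV \<longrightarrow>
       dloc (Fbar m (distfun p)) (Fbar m (distfun q))
         \<le> C * (dW (distfun p) (distfun q) powr (1 - 2 / real (l + 1)))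
             * smooth l m (distfun p) (distfun q) powr (2 / real (l + 1))"
proof (intro exI[of _ "(2^(l+1) * 2^2 + 2^l) * 1"] conjI allI impI)
  show "(2^(l+1) * 2^2 + 2^l) * 1 > (0::real)" by (intro mult_pos_pos add_pos_pos) auto
  fix p q :: "int pmf"
  assume S: "(\<lambda>i. \<bar>distfun p i - distfun q i\<bar>) summable_on UNIV"
  interpret pq p q m l using assms by unfold_locales
  note W = wL1[OF S]
  define U where "U = lnorminf (Delta 1 w)"
  define X where "X = lnorm1 w"
  define Y where "Y = lnorm1 (Delta (Suc l) w)"
  have X0: "X \<ge> 0" "Y \<ge> 0" by (auto simp: X_def Y_def lnorm1_nonneg)
  have H1: "U \<le> 2^(l+1) * X" unfolding U_def
  proof (rule sup_le)
    fix k
    have "\<bar>Delta 1 w k\<bar> \<le> 2 * X" using Delta1_abs[of w k] L1_point[OF W(1), of k] L1_point[OF W(1), of "k+1"]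
      unfolding X_def by linarith
    also have "\<dots> \<le> 2^(l+1) * X" using X0 l
      by (intro mult_right_mono) (auto simp: self_le_power)
    finally show "\<bar>Delta 1 w k\<bar> \<le> 2^(l+1) * X" .
  qed
  have H2: "U \<le> 2^(l+1) * X / real n ^ 2 + 2^l * real n ^ (l-1) * Y" if n: "n \<ge> 1" for n
    unfolding U_def
  proof (rule sup_le)
    fix k
    have "\<bar>Delta 1 w k\<bar> \<le> 2^l * (2 * X / real n ^ 2) + 2^l * real n ^ (l-1) * Y"
      using ptC[OF l W(1) n, of k] unfolding X_def Y_def by simp
    then show "\<bar>Delta 1 w k\<bar> \<le> 2^(l+1) * X / real n ^ 2 + 2^l * real n ^ (l-1) * Y"
      by (simp add: algebra_simps)
  qed
  have I: "U \<le> (2^(l+1) * 2^2 + 2^l) * X powr (real (l-1) / real (2 + (l-1))) * Y powr (real 2 / real (2 + (l-1)))"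
    by (rule interp[where s=2 and t="l-1", OF _ X0(1) X0(2) _ _ H1 H2]) auto
  have "U \<le> ((2^(l+1) * 2^2 + 2^l) * 1) * dW (distfun p) (distfun q) powr (1 - 2 / real (l+1))
             * smooth l m (distfun p) (distfun q) powr (2 / real (l+1))"
    by (rule finish[OF I[unfolded exps[OF l]] X0(1) _ X0(2)])
       (use W(2) Y(2) exps[OF l] in \<open>auto simp: X_def Y_def\<close>)
  then show "dloc (Fbar m (distfun p)) (Fbar m (distfun q))
         \<le> ((2^(l+1) * 2^2 + 2^l) * 1) * (dW (distfun p) (distfun q) powr (1 - 2 / real (l + 1)))
             * smooth l m (distfun p) (distfun q) powr (2 / real (l + 1))"
    by (simp add: dloc_eq U_def)
qed

lemma part4:
  assumes l: "l \<ge> 1" and m: "m \<ge> 1"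
  shows "\<exists>C>0. \<forall>(p::int pmf) (q::int pmf).
       (\<lambda>i. \<bar>distfun p i - distfun q i\<bar>) summable_on UNIV \<longrightarrow>
       dTV (Fbar m (distfun p)) (Fbar m (distfun q))
         \<le> C * (dW (distfun p) (distfun q) powr (1 - 1 / real (l + 1)))
             * smooth l m (distfun p) (distfun q) powr (1 / real (l + 1))"
proof (intro exI[of _ "(2^(l+1) * 2^1 + 1) * 1"] conjI allI impI)
  show "(2^(l+1) * 2^1 + 1) * 1 > (0::real)" by (intro mult_pos_pos add_pos_pos) auto
  fix p q :: "int pmf"
  assume S: "(\<lambda>i. \<bar>distfun p i - distfun q i\<bar>) summable_on UNIV"
  interpret pq p q m l using assms by unfold_locales
  note W = wL1[OF S]
  define U where "U = lnorm1 (Delta 1 w)"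
  define X where "X = lnorm1 w"
  define Y where "Y = lnorm1 (Delta (Suc l) w)"
  have X0: "X \<ge> 0" "Y \<ge> 0" by (auto simp: X_def Y_def lnorm1_nonneg)
  have H1: "U \<le> 2^(l+1) * X"
  proof -
    have e: "Delta 1 w = (\<lambda>k. w (k + 1) - w k)" by (rule ext) (rule Delta_1)
    have "U \<le> lnorm1 (\<lambda>k. w (k + 1)) + lnorm1 w"
      unfolding U_def e by (rule L1_diff(2)[OF L1_shift(1)[OF W(1)] W(1)])
    also have "\<dots> = 2 * X" unfolding X_def L1_shift(2)[OF W(1)] by simp
    also have "\<dots> \<le> 2^(l+1) * X" using X0 l
      by (intro mult_right_mono) (auto simp: self_le_power)
    finally show ?thesis .
  qed
  have H2: "U \<le> 2^(l+1) * X / real n ^ 1 + 1 * real n ^ l * Y" if n: "n \<ge> 1" for n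
  proof -
    have "U \<le> 2^l * (2 * X / real n) + real n ^ l * Y"
      using ptD[OF l W(1) n] unfolding U_def X_def Y_def by simp
    then show ?thesis by (simp add: algebra_simps)
  qed
  have I: "U \<le> (2^(l+1) * 2^1 + 1) * X powr (real l / real (1 + l)) * Y powr (real 1 / real (1 + l))"
    by (rule interp[where s=1 and t="l", OF _ X0(1) X0(2) _ _ H1 H2]) auto
  have "U \<le> ((2^(l+1) * 2^1 + 1) * 1) * dW (distfun p) (distfun q) powr (1 - 1 / real (l+1))
             * smooth l m (distfun p) (distfun q) powr (1 / real (l+1))"
    by (rule finish[OF I[unfolded exps[OF l]] X0(1) _ X0(2)])
       (use W(2) Y(2) exps[OF l] in \<open>auto simp: X_def Y_def\<close>)
  moreover have "dTV (Fbar m (distfun p)) (Fbar m (distfun q)) \<le> U"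
    unfolding dTV_eq U_def using lnorm1_nonneg[of "Delta 1 w"] by simp
  ultimately show "dTV (Fbar m (distfun p)) (Fbar m (distfun q))
         \<le> ((2^(l+1) * 2^1 + 1) * 1) * (dW (distfun p) (distfun q) powr (1 - 1 / real (l + 1)))
             * smooth l m (distfun p) (distfun q) powr (1 / real (l + 1))"
    by simp
qed

lemma part5:
  assumes l: "l \<ge> 1" and m: "m \<ge> 1"
  shows "\<exists>C>0. \<forall>(p::int pmf) (q::int pmf).
       (\<lambda>i. \<bar>distfun p i - distfun q i\<bar>) summable_on UNIV \<longrightarrow>
       dK (Fbar m (distfun p)) (Fbar m (distfun q))
         \<le> C * (dW (distfun p) (distfun q) powr (1 - 1 / real (l + 1)))
             * smooth l m (distfun p) (distfun q) powr (1 / real (l + 1))"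
proof (intro exI[of _ "(2^(l+1) * 2^1 + 1) * 1"] conjI allI impI)
  show "(2^(l+1) * 2^1 + 1) * 1 > (0::real)" by (intro mult_pos_pos add_pos_pos) auto
  fix p q :: "int pmf"
  assume S: "(\<lambda>i. \<bar>distfun p i - distfun q i\<bar>) summable_on UNIV"
  interpret pq p q m l using assms by unfold_locales
  note W = wL1[OF S]
  define U where "U = lnorminf w"
  define X where "X = lnorm1 w"
  define Y where "Y = lnorm1 (Delta (Suc l) w)"
  have X0: "X \<ge> 0" "Y \<ge> 0" by (auto simp: X_def Y_def lnorm1_nonneg)
  have l1: "Suc l \<ge> 1" by simp
  have H1: "U \<le> 2^(Suc l) * X" unfolding U_def
  proof (rule sup_le)
    fix k
    have "\<bar>w k\<bar> \<le> X" unfolding X_def by (rule L1_point[OF W(1)])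
    also have "\<dots> \<le> 2^(Suc l) * X"
    proof -
      have "(1::real) \<le> 2^Suc l" by (rule one_le_power) simp
      then show ?thesis using X0 mult_right_mono[of 1 "2^Suc l" X] by simp
    qed
    finally show "\<bar>w k\<bar> \<le> 2^(Suc l) * X" .
  qed
  have H2: "U \<le> 2^(Suc l) * X / real n ^ 1 + 1 * real n ^ l * Y" if n: "n \<ge> 1" for n
    unfolding U_def
  proof (rule sup_le)
    fix k
    show "\<bar>w k\<bar> \<le> 2^(Suc l) * X / real n ^ 1 + 1 * real n ^ l * Y"
      using ptA[OF l1 W(1) n, of k] unfolding X_def Y_def by simp
  qed
  have I: "U \<le> (2^(Suc l) * 2^1 + 1) * X powr (real l / real (1 + l)) * Y powr (real 1 / real (1 + l))"
    by (rule interp[where s=1 and t="l", OF _ X0(1) X0(2) _ _ H1 H2]) auto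
  have "U \<le> ((2^(Suc l) * 2^1 + 1) * 1) * dW (distfun p) (distfun q) powr (1 - 1 / real (l+1))
             * smooth l m (distfun p) (distfun q) powr (1 / real (l+1))"
    by (rule finish[OF I[unfolded exps[OF l]] X0(1) _ X0(2)])
       (use W(2) Y(2) exps[OF l] in \<open>auto simp: X_def Y_def\<close>)
  then show "dK (Fbar m (distfun p)) (Fbar m (distfun q))
         \<le> ((2^(l+1) * 2^1 + 1) * 1) * (dW (distfun p) (distfun q) powr (1 - 1 / real (l + 1)))
             * smooth l m (distfun p) (distfun q) powr (1 / real (l + 1))"
    by (simp add: dK_eq U_def)
qed


theorem theorem2:
  fixes l m :: nat
  assumes "l \<ge> 1" and "m \<ge> 1"
  shows
   "(\<exists>C>0. \<forall>(p::int pmf) (q::int pmf).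
       dloc (Fbar m (distfun p)) (Fbar m (distfun q))
         \<le> C * (dTV (distfun p) (distfun q) powr (1 - 1 / real l))
             * smooth l m (distfun p) (distfun q) powr (1 / real l))
  \<and> (\<exists>C>0. \<forall>(p::int pmf) (q::int pmf).
       dloc (Fbar m (distfun p)) (Fbar m (distfun q))
         \<le> C * (dK (distfun p) (distfun q) powr (1 - 1 / real l))
             * smooth l m (distfun p) (distfun q) powr (1 / real l))
  \<and> (\<exists>C>0. \<forall>(p::int pmf) (q::int pmf).
       (\<lambda>i. \<bar>distfun p i - distfun q i\<bar>) summable_on UNIV \<longrightarrow>
       dloc (Fbar m (distfun p)) (Fbar m (distfun q))
         \<le> C * (dW (distfun p) (distfun q) powr (1 - 2 / real (l + 1)))
             * smooth l m (distfun p) (distfun q) powr (2 / real (l + 1)))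
  \<and> (\<exists>C>0. \<forall>(p::int pmf) (q::int pmf).
       (\<lambda>i. \<bar>distfun p i - distfun q i\<bar>) summable_on UNIV \<longrightarrow>
       dTV (Fbar m (distfun p)) (Fbar m (distfun q))
         \<le> C * (dW (distfun p) (distfun q) powr (1 - 1 / real (l + 1)))
             * smooth l m (distfun p) (distfun q) powr (1 / real (l + 1)))
  \<and> (\<exists>C>0. \<forall>(p::int pmf) (q::int pmf).
       (\<lambda>i. \<bar>distfun p i - distfun q i\<bar>) summable_on UNIV \<longrightarrow>
       dK (Fbar m (distfun p)) (Fbar m (distfun q))
         \<le> C * (dW (distfun p) (distfun q) powr (1 - 1 / real (l + 1)))
             * smooth l m (distfun p) (distfun q) powr (1 / real (l + 1)))"
    using part1[OF assms] part2[OF assms] part3[OF assms] part4[OF assms] part5[OF assms]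
  by blast

end
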